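(* Let $\mathcal H$ be a Heisenberg $p$-group with centre $\mathcal Z$ and let $\alpha$ be an automorphism of $\mathcal H$ of order two whose restriction to $\mathcal Z$ is not the identity; let $\mathcal H^+_\alpha=\{h\in\mathcal H:\alpha(h)=h\}$. Then $\mathcal H^+_\alpha\,\alpha(h)\,\mathcal H^+_\alpha=\mathcal H^+_\alpha\,h^{-1}\,\mathcal H^+_\alpha$ for all $h\in\mathcal H$, and consequently $(\mathcal H,\mathcal H^+_\alpha)$ is a Gelfand pair: for every irreducible representation $\rho$ of $\mathcal H$, $\dim\operatorname{Hom}_{\mathcal H^+_\alpha}(\rho,1)\le1$.
   Context: $p$ is an odd prime. A Heisenberg $p$-group is a group isomorphic to $W\boxtimes C$, where $C$ is cyclic of order $p$, $W$ is a finite $\mathbb F_p$-vector space with a nondegenerate alternating biadditive $C$-valued form $\langle\,,\rangle$, and $W\boxtimes C$ is $W\times C$ with multiplication $(w_1,z_1)(w_2,z_2)=(w_1+w_2,z_1+z_2+\tfrac12\langle w_1,w_2\rangle)$. *)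

theory Defs
  imports "HOL-Algebra.Algebra" "Jordan_Normal_Form.Matrix"
begin

text \<open>W is a finite F_p-vector space, modelled (in multiplicative notation) as a finite
commutative group of exponent p (i.e. an elementary abelian p-group; its F_p-structure is
canonical). C is the cyclic group of order p, modelled as the integers {0..<p} modulo p.
B is a nondegenerate alternating biadditive C-valued form on W.\<close>

definition alt_form :: "('w, 'm) monoid_scheme \<Rightarrow> nat \<Rightarrow> ('w \<Rightarrow> 'w \<Rightarrow> int) \<Rightarrow> bool" where
  "alt_form W p B \<longleftrightarrow>
     (\<forall>v\<in>carrier W. \<forall>w\<in>carrier W. B v w \<in> {0..<int p}) \<and>
     (\<forall>u\<in>carrier W. \<forall>v\<in>carrier W. \<forall>w\<in>carrier W.
        B (u \<otimes>\<^bsub>W\<^esub> v) w = (B u w + B v w) mod int p) \<and>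
     (\<forall>u\<in>carrier W. \<forall>v\<in>carrier W. \<forall>w\<in>carrier W.
        B u (v \<otimes>\<^bsub>W\<^esub> w) = (B u v + B u w) mod int p) \<and>
     (\<forall>w\<in>carrier W. B w w = 0) \<and>
     (\<forall>v\<in>carrier W. (\<forall>w\<in>carrier W. B v w = 0) \<longrightarrow> v = \<one>\<^bsub>W\<^esub>)"

definition Fp_space :: "('w, 'm) monoid_scheme \<Rightarrow> nat \<Rightarrow> bool" where
  "Fp_space W p \<longleftrightarrow> comm_group W \<and> finite (carrier W) \<and>
     (\<forall>w\<in>carrier W. w [^]\<^bsub>W\<^esub> p = \<one>\<^bsub>W\<^esub>)"

text \<open>The group W \<boxtimes> C: (w1,z1)(w2,z2) = (w1+w2, z1+z2+ (1/2)<w1,w2>), where 1/2 in Z/p is (p+1)/2.\<close>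

definition heis :: "('w, 'm) monoid_scheme \<Rightarrow> nat \<Rightarrow> ('w \<Rightarrow> 'w \<Rightarrow> int) \<Rightarrow> ('w \<times> int) monoid" where
  "heis W p B = \<lparr> carrier = carrier W \<times> {0..<int p},
     monoid.mult = (\<lambda>(w1, z1) (w2, z2). (w1 \<otimes>\<^bsub>W\<^esub> w2,
                 (z1 + z2 + ((int p + 1) div 2) * B w1 w2) mod int p)),
     monoid.one = (\<one>\<^bsub>W\<^esub>, 0) \<rparr>"

definition heisenberg_p_group :: "('g, 'n) monoid_scheme \<Rightarrow> nat \<Rightarrow> ('w, 'm) monoid_scheme \<Rightarrow> ('w \<Rightarrow> 'w \<Rightarrow> int) \<Rightarrow> bool" where
  "heisenberg_p_group H p W B \<longleftrightarrow> Fp_space W p \<and> alt_form W p B \<and> H \<cong> heis W p B"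

definition centre :: "('g, 'n) monoid_scheme \<Rightarrow> 'g set" where
  "centre G = {z \<in> carrier G. \<forall>g\<in>carrier G. z \<otimes>\<^bsub>G\<^esub> g = g \<otimes>\<^bsub>G\<^esub> z}"

definition fixed_points :: "('g, 'n) monoid_scheme \<Rightarrow> ('g \<Rightarrow> 'g) \<Rightarrow> 'g set" where
  "fixed_points G \<alpha> = {h \<in> carrier G. \<alpha> h = h}"

definition representation :: "('g, 'n) monoid_scheme \<Rightarrow> nat \<Rightarrow> ('g \<Rightarrow> complex mat) \<Rightarrow> bool" where
  "representation G n \<rho> \<longleftrightarrow>
     (\<forall>g\<in>carrier G. \<rho> g \<in> carrier_mat n n) \<and>
     \<rho> \<one>\<^bsub>G\<^esub> = 1\<^sub>m n \<and>
     (\<forall>g\<in>carrier G. \<forall>h\<in>carrier G. \<rho> (g \<otimes>\<^bsub>G\<^esub> h) = \<rho> g * \<rho> h)"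

definition subspace_vec :: "nat \<Rightarrow> complex vec set \<Rightarrow> bool" where
  "subspace_vec n U \<longleftrightarrow> U \<subseteq> carrier_vec n \<and> 0\<^sub>v n \<in> U \<and>
     (\<forall>u\<in>U. \<forall>v\<in>U. u + v \<in> U) \<and> (\<forall>c. \<forall>u\<in>U. c \<cdot>\<^sub>v u \<in> U)"

definition irreducible_rep :: "('g, 'n) monoid_scheme \<Rightarrow> nat \<Rightarrow> ('g \<Rightarrow> complex mat) \<Rightarrow> bool" where
  "irreducible_rep G n \<rho> \<longleftrightarrow> representation G n \<rho> \<and> n > 0 \<and>
     (\<forall>U. subspace_vec n U \<and> (\<forall>g\<in>carrier G. \<forall>u\<in>U. \<rho> g *\<^sub>v u \<in> U)
          \<longrightarrow> U = {0\<^sub>v n} \<or> U = carrier_vec n)"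

text \<open>Hom_K(\<rho>, 1): linear functionals on C^n (represented as v \<mapsto> f \<bullet> v) that are
K-invariant.\<close>

definition Hom_triv :: "'g set \<Rightarrow> nat \<Rightarrow> ('g \<Rightarrow> complex mat) \<Rightarrow> complex vec set" where
  "Hom_triv K n \<rho> = {f \<in> carrier_vec n. \<forall>h\<in>K. \<forall>v\<in>carrier_vec n. f \<bullet> (\<rho> h *\<^sub>v v) = f \<bullet> v}"

definition dim_le_one :: "nat \<Rightarrow> complex vec set \<Rightarrow> bool" where
  "dim_le_one n S \<longleftrightarrow> (\<exists>g\<in>carrier_vec n. S \<subseteq> {c \<cdot>\<^sub>v g | c. True})"

end

theory Submission
  imports Defs "Jordan_Normal_Form.Spectral_Radius"
begin



lemma (in group) inv_cancel_l[simp]: "x \<in> carrier G \<Longrightarrow> y \<in> carrier G \<Longrightarrow> inv x \<otimes> (x \<otimes> y) = y"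
  by (simp add: m_assoc[symmetric])
lemma (in group) inv_cancel_r2[simp]: "x \<in> carrier G \<Longrightarrow> y \<in> carrier G \<Longrightarrow> x \<otimes> (inv x \<otimes> y) = y"
  by (simp add: m_assoc[symmetric])

lemma (in group) conj_pow:
  assumes "g \<in> carrier G" "u \<in> carrier G"
  shows "(g \<otimes> u \<otimes> inv g) [^] (n::nat) = g \<otimes> u [^] n \<otimes> inv g"
proof (induction n)
  case 0 then show ?case using assms by (simp add: r_inv)
next
  case (Suc n)
  have "(g \<otimes> u \<otimes> inv g) [^] Suc n = (g \<otimes> u [^] n \<otimes> inv g) \<otimes> (g \<otimes> u \<otimes> inv g)"
    using Suc by simp
  also have "\<dots> = g \<otimes> (u [^] n \<otimes> u) \<otimes> inv g" using assms
    by (simp add: m_assoc)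
  finally show ?case by simp
qed

lemma (in group) key_decomp:
  assumes p: "odd (p::nat)"
    and expo: "\<And>x. x \<in> carrier G \<Longrightarrow> x [^] p = \<one>"
    and comm: "\<And>a b y. a \<in> carrier G \<Longrightarrow> b \<in> carrier G \<Longrightarrow> y \<in> carrier G \<Longrightarrow>
         (inv a \<otimes> b \<otimes> a \<otimes> inv b) \<otimes> y = y \<otimes> (inv a \<otimes> b \<otimes> a \<otimes> inv b)"
    and hom: "\<alpha> \<in> hom G G" and inv2: "\<And>h. h \<in> carrier G \<Longrightarrow> \<alpha> (\<alpha> h) = h"
    and g: "g \<in> carrier G"
  shows "\<exists>k\<in>carrier G. \<alpha> k = k \<and> \<alpha> g = k \<otimes> inv g \<otimes> k"
proof -
  define m where "m = Suc p div 2"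
  have m2: "m + m = Suc p" using p unfolding m_def by presburger
  have sq: "x [^] m \<otimes> x [^] m = x" if x: "x \<in> carrier G" for x
    using nat_pow_mult[OF x, of m m] m2 expo[OF x] x by simp
  have ac: "\<alpha> x \<in> carrier G" if "x \<in> carrier G" for x using hom that by (auto simp: hom_def)
  have am: "\<alpha> (x \<otimes> y) = \<alpha> x \<otimes> \<alpha> y" if "x \<in> carrier G" "y \<in> carrier G" for x y
    using hom that by (auto simp: hom_def)
  interpret gh: group_hom G G \<alpha> using hom by (unfold_locales)
  have ai: "\<alpha> (inv x) = inv (\<alpha> x)" if "x \<in> carrier G" for x using gh.hom_inv that by simp
  have ap: "\<alpha> (x [^] (n::nat)) = \<alpha> x [^] n" if "x \<in> carrier G" for x n using gh.hom_nat_pow that by simp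
  define u where "u = \<alpha> g \<otimes> g"
  have u: "u \<in> carrier G" using g ac unfolding u_def by simp
  have au: "\<alpha> u = g \<otimes> u \<otimes> inv g"
    unfolding u_def using g ac am inv2 by (simp add: m_assoc)
  define v where "v = u [^] m"
  have v: "v \<in> carrier G" using u unfolding v_def by simp
  have av: "\<alpha> v = g \<otimes> v \<otimes> inv g"
    unfolding v_def using ap[OF u] au conj_pow[OF g u] by simp
  define c where "c = inv v \<otimes> \<alpha> v"
  have c: "c \<in> carrier G" using v ac unfolding c_def by simp
  have c2: "c = inv v \<otimes> g \<otimes> v \<otimes> inv g" unfolding c_def av using g v by (simp add: m_assoc)
  have ccomm: "c \<otimes> y = y \<otimes> c" if "y \<in> carrier G" for y
    unfolding c2 using comm[OF v g that] .
  have cmcomm: "c [^] m \<otimes> y = y \<otimes> c [^] m" if "y \<in> carrier G" for y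
    using group_commutes_pow[OF ccomm[OF that] c that] .
  have ac2: "\<alpha> c = inv c" unfolding c_def using v ac am ai inv2
    by (simp add: inv_mult_group)
  have avc: "\<alpha> v = v \<otimes> c" unfolding c_def using v ac by (simp add: m_assoc[symmetric])
  define k where "k = v \<otimes> c [^] m"
  have k: "k \<in> carrier G" unfolding k_def using v c by simp
  have "\<alpha> k = v \<otimes> c \<otimes> inv (c [^] m)"
    unfolding k_def using am[of v "c [^] m"] v c ap[OF c] ac2 avc nat_pow_inv[OF c] by simp
  also have "\<dots> = v \<otimes> (c [^] m \<otimes> c [^] m) \<otimes> inv (c [^] m)" using sq[OF c] by simp
  also have "\<dots> = k" unfolding k_def using v c by (simp add: m_assoc)
  finally have ak: "\<alpha> k = k" .
  have "k \<otimes> inv g \<otimes> k = v \<otimes> (c [^] m \<otimes> (inv g \<otimes> v)) \<otimes> c [^] m"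
    unfolding k_def using v c g by (simp add: m_assoc)
  also have "\<dots> = v \<otimes> inv g \<otimes> v \<otimes> (c [^] m \<otimes> c [^] m)"
    using cmcomm[of "inv g \<otimes> v"] v c g by (simp add: m_assoc)
  also have "\<dots> = v \<otimes> inv g \<otimes> v \<otimes> (inv v \<otimes> g \<otimes> v \<otimes> inv g)"
    using sq[OF c] c2 by simp
  also have "\<dots> = (v \<otimes> v) \<otimes> inv g" using v g by (simp add: m_assoc)
  also have "v \<otimes> v = u" unfolding v_def using sq[OF u] .
  also have "u \<otimes> inv g = \<alpha> g" unfolding u_def using g ac by (simp add: m_assoc)
  finally show ?thesis using k ak by auto
qed


lemma heis_mult: "(x1, z1) \<otimes>\<^bsub>heis W p B\<^esub> (x2, z2) =
   (x1 \<otimes>\<^bsub>W\<^esub> x2, (z1 + z2 + ((int p + 1) div 2) * B x1 x2) mod int p)"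
  by (simp add: heis_def)
lemma heis_carrier: "carrier (heis W p B) = carrier W \<times> {0..<int p}"
  by (simp add: heis_def)
lemma heis_one: "\<one>\<^bsub>heis W p B\<^esub> = (\<one>\<^bsub>W\<^esub>, 0)"
  by (simp add: heis_def)

lemma double_mod_self:
  fixes b P :: int assumes "0 \<le> b" "b < P" "b = (b + b) mod P" shows "b = 0"
proof -
  have bm: "b mod P = b" using assms(1,2) by (rule mod_pos_pos_trivial)
  have "(b + b) mod P = b mod P" using assms(3) bm by simp
  then have "P dvd (b + b) - b" by (simp only: mod_eq_dvd_iff)
  then have "P dvd b" by simp
  then have "b mod P = 0" by simp
  then show ?thesis using bm by simp
qed

lemma heis_facts:
  fixes H :: "('g, 'n) monoid_scheme" and W :: "('w, 'm) monoid_scheme"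
  assumes pr: "Factorial_Ring.prime p" and od: "odd p" and gH: "group H"
    and hp: "heisenberg_p_group H p W B"
  shows "finite (carrier H)"
    and "\<And>x. x \<in> carrier H \<Longrightarrow> x [^]\<^bsub>H\<^esub> p = \<one>\<^bsub>H\<^esub>"
    and "\<And>a b y. a \<in> carrier H \<Longrightarrow> b \<in> carrier H \<Longrightarrow> y \<in> carrier H \<Longrightarrow>
         (inv\<^bsub>H\<^esub> a \<otimes>\<^bsub>H\<^esub> b \<otimes>\<^bsub>H\<^esub> a \<otimes>\<^bsub>H\<^esub> inv\<^bsub>H\<^esub> b) \<otimes>\<^bsub>H\<^esub> y
          = y \<otimes>\<^bsub>H\<^esub> (inv\<^bsub>H\<^esub> a \<otimes>\<^bsub>H\<^esub> b \<otimes>\<^bsub>H\<^esub> a \<otimes>\<^bsub>H\<^esub> inv\<^bsub>H\<^esub> b)"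
proof -
  interpret H: group H by (rule gH)
  have Fp: "Fp_space W p" and af: "alt_form W p B" and iso: "H \<cong> heis W p B"
    using hp unfolding heisenberg_p_group_def by auto
  interpret W: comm_group W using Fp unfolding Fp_space_def by auto
  have finW: "finite (carrier W)" using Fp unfolding Fp_space_def by auto
  have expW: "\<And>w. w \<in> carrier W \<Longrightarrow> w [^]\<^bsub>W\<^esub> p = \<one>\<^bsub>W\<^esub>" using Fp unfolding Fp_space_def by auto
  have Brange: "\<And>v w. v \<in> carrier W \<Longrightarrow> w \<in> carrier W \<Longrightarrow> B v w \<in> {0..<int p}"
    and Badd1: "\<And>u v w. u \<in> carrier W \<Longrightarrow> v \<in> carrier W \<Longrightarrow> w \<in> carrier W \<Longrightarrow>
        B (u \<otimes>\<^bsub>W\<^esub> v) w = (B u w + B v w) mod int p"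
    and Badd2: "\<And>u v w. u \<in> carrier W \<Longrightarrow> v \<in> carrier W \<Longrightarrow> w \<in> carrier W \<Longrightarrow>
        B u (v \<otimes>\<^bsub>W\<^esub> w) = (B u v + B u w) mod int p"
    and Balt: "\<And>w. w \<in> carrier W \<Longrightarrow> B w w = 0"
    using af unfolding alt_form_def by blast+
  have B1l: "B \<one>\<^bsub>W\<^esub> w = 0" if w: "w \<in> carrier W" for w
    using Badd1[of "\<one>\<^bsub>W\<^esub>" "\<one>\<^bsub>W\<^esub>" w] Brange[of "\<one>\<^bsub>W\<^esub>" w] w
    by (intro double_mod_self[of _ "int p"]) auto
  have B1r: "B w \<one>\<^bsub>W\<^esub> = 0" if w: "w \<in> carrier W" for w
    using Badd2[of w "\<one>\<^bsub>W\<^esub>" "\<one>\<^bsub>W\<^esub>"] Brange[of w "\<one>\<^bsub>W\<^esub>"] w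
    by (intro double_mod_self[of _ "int p"]) auto
  have Bpow: "B (w [^]\<^bsub>W\<^esub> j) w = 0" if w: "w \<in> carrier W" for w and j :: nat
  proof (induction j)
    case 0 then show ?case using B1l[OF w] by simp
  next
    case (Suc j) then show ?case using Badd1[of "w [^]\<^bsub>W\<^esub> j" w w] w Balt[OF w] by simp
  qed
  have pp: "p > 0" using pr prime_gt_0_nat by blast
  obtain \<phi> where phi: "\<phi> \<in> iso H (heis W p B)" using iso unfolding is_iso_def by auto
  have phc: "\<phi> x \<in> carrier W \<times> {0..<int p}" if "x \<in> carrier H" for x
    using phi that unfolding iso_def hom_def heis_carrier by auto
  have phm: "\<phi> (x \<otimes>\<^bsub>H\<^esub> y) = \<phi> x \<otimes>\<^bsub>heis W p B\<^esub> \<phi> y" if "x \<in> carrier H" "y \<in> carrier H" for x y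
    using phi that unfolding iso_def hom_def by auto
  have bij: "bij_betw \<phi> (carrier H) (carrier W \<times> {0..<int p})"
    using phi unfolding iso_def heis_carrier by auto
  then have inj: "inj_on \<phi> (carrier H)" by (rule bij_betw_imp_inj_on)
  have "finite (carrier W \<times> {0..<int p})" using finW by simp
  then show "finite (carrier H)" using bij_betw_finite[OF bij] by simp
  have ph1: "\<phi> \<one>\<^bsub>H\<^esub> = (\<one>\<^bsub>W\<^esub>, 0)"
  proof -
    obtain a b where ab: "\<phi> \<one>\<^bsub>H\<^esub> = (a, b)" by fastforce
    have a: "a \<in> carrier W" and b: "0 \<le> b" "b < int p" using phc[of "\<one>\<^bsub>H\<^esub>"] ab by auto
    have "(a, b) = (a \<otimes>\<^bsub>W\<^esub> a, (b + b + ((int p + 1) div 2) * B a a) mod int p)"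
      using phm[of "\<one>\<^bsub>H\<^esub>" "\<one>\<^bsub>H\<^esub>"] ab by (simp add: heis_mult)
    then have e1: "a \<otimes>\<^bsub>W\<^esub> a = a" and e2: "b = (b + b + ((int p + 1) div 2) * B a a) mod int p"
      by (metis prod.inject)+
    have "b = (b + b) mod int p" using e2 Balt[OF a] by simp
    then have b0: "b = 0" using b double_mod_self[of b "int p"] by blast
    have "inv\<^bsub>W\<^esub> a \<otimes>\<^bsub>W\<^esub> (a \<otimes>\<^bsub>W\<^esub> a) = inv\<^bsub>W\<^esub> a \<otimes>\<^bsub>W\<^esub> a" using e1 by simp
    then have a1: "a = \<one>\<^bsub>W\<^esub>" using a by (simp add: W.m_assoc[symmetric])
    from a1 b0 have "a = \<one>\<^bsub>W\<^esub>" "b = 0" by auto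
    then show ?thesis using ab by simp
  qed
  have phpow: "\<phi> (x [^]\<^bsub>H\<^esub> n) = (fst (\<phi> x) [^]\<^bsub>W\<^esub> n, (int n * snd (\<phi> x)) mod int p)"
    if x: "x \<in> carrier H" for x and n :: nat
  proof (induction n)
    case 0 then show ?case using ph1 by simp
  next
    case (Suc n)
    obtain a b where ab: "\<phi> x = (a, b)" by fastforce
    have a: "a \<in> carrier W" using phc[OF x] ab by auto
    have "\<phi> (x [^]\<^bsub>H\<^esub> Suc n) = \<phi> (x [^]\<^bsub>H\<^esub> n) \<otimes>\<^bsub>heis W p B\<^esub> \<phi> x"
      using phm x by simp
    also have "\<dots> = (a [^]\<^bsub>W\<^esub> n \<otimes>\<^bsub>W\<^esub> a, ((int n * b) mod int p + b) mod int p)"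
      using Suc ab Bpow[OF a] by (simp add: heis_mult)
    also have "((int n * b) mod int p + b) mod int p = (int n * b + b) mod int p"
      by (rule mod_add_left_eq)
    also have "int n * b + b = int (Suc n) * b" by (simp add: algebra_simps)
    finally show ?case using ab by simp
  qed
  show "x [^]\<^bsub>H\<^esub> p = \<one>\<^bsub>H\<^esub>" if x: "x \<in> carrier H" for x
  proof -
    have "\<phi> (x [^]\<^bsub>H\<^esub> p) = \<phi> \<one>\<^bsub>H\<^esub>"
      using phpow[OF x, of p] ph1 expW phc[OF x] by auto
    then show ?thesis using inj x unfolding inj_on_def by auto
  qed
  define f where "f = (\<lambda>x. fst (\<phi> x))"
  have fhom: "f \<in> hom H W"
  proof (rule homI)
    show "f x \<in> carrier W" if "x \<in> carrier H" for x using phc[OF that] unfolding f_def by auto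
    show "f (x \<otimes>\<^bsub>H\<^esub> y) = f x \<otimes>\<^bsub>W\<^esub> f y" if "x \<in> carrier H" "y \<in> carrier H" for x y
      using phm[OF that] unfolding f_def by (cases "\<phi> x", cases "\<phi> y") (simp add: heis_mult)
  qed
  interpret fh: group_hom H W f by (unfold_locales) (rule fhom)
  have cent: "z \<otimes>\<^bsub>H\<^esub> y = y \<otimes>\<^bsub>H\<^esub> z" if z: "z \<in> carrier H" and y: "y \<in> carrier H"
    and fz: "f z = \<one>\<^bsub>W\<^esub>" for z y
  proof -
    obtain a b where ab: "\<phi> z = (a, b)" by fastforce
    obtain c d where cd: "\<phi> y = (c, d)" by fastforce
    have a: "a = \<one>\<^bsub>W\<^esub>" using fz ab unfolding f_def by simp
    have c: "c \<in> carrier W" using phc[OF y] cd by auto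
    have "\<phi> (z \<otimes>\<^bsub>H\<^esub> y) = \<phi> (y \<otimes>\<^bsub>H\<^esub> z)"
      using phm[OF z y] phm[OF y z] ab cd a B1l[OF c] B1r[OF c] c
      by (simp add: heis_mult add.commute)
    then show ?thesis using inj z y unfolding inj_on_def by auto
  qed
  show "(inv\<^bsub>H\<^esub> a \<otimes>\<^bsub>H\<^esub> b \<otimes>\<^bsub>H\<^esub> a \<otimes>\<^bsub>H\<^esub> inv\<^bsub>H\<^esub> b) \<otimes>\<^bsub>H\<^esub> y
          = y \<otimes>\<^bsub>H\<^esub> (inv\<^bsub>H\<^esub> a \<otimes>\<^bsub>H\<^esub> b \<otimes>\<^bsub>H\<^esub> a \<otimes>\<^bsub>H\<^esub> inv\<^bsub>H\<^esub> b)"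
    if a: "a \<in> carrier H" and b: "b \<in> carrier H" and y: "y \<in> carrier H" for a b y
  proof (rule cent[OF _ y])
    show "inv\<^bsub>H\<^esub> a \<otimes>\<^bsub>H\<^esub> b \<otimes>\<^bsub>H\<^esub> a \<otimes>\<^bsub>H\<^esub> inv\<^bsub>H\<^esub> b \<in> carrier H" using a b by simp
    have fa: "f a \<in> carrier W" and fb: "f b \<in> carrier W" using a b fh.hom_closed by auto
    show "f (inv\<^bsub>H\<^esub> a \<otimes>\<^bsub>H\<^esub> b \<otimes>\<^bsub>H\<^esub> a \<otimes>\<^bsub>H\<^esub> inv\<^bsub>H\<^esub> b) = \<one>\<^bsub>W\<^esub>"
    proof -
      have "f (inv\<^bsub>H\<^esub> a \<otimes>\<^bsub>H\<^esub> b \<otimes>\<^bsub>H\<^esub> a \<otimes>\<^bsub>H\<^esub> inv\<^bsub>H\<^esub> b)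
         = inv\<^bsub>W\<^esub> f a \<otimes>\<^bsub>W\<^esub> f b \<otimes>\<^bsub>W\<^esub> f a \<otimes>\<^bsub>W\<^esub> inv\<^bsub>W\<^esub> f b"
        using a b by (simp add: fh.hom_inv)
      also have "inv\<^bsub>W\<^esub> f a \<otimes>\<^bsub>W\<^esub> f b \<otimes>\<^bsub>W\<^esub> f a = inv\<^bsub>W\<^esub> f a \<otimes>\<^bsub>W\<^esub> (f a \<otimes>\<^bsub>W\<^esub> f b)"
        using fa fb W.m_comm[OF fa fb] by (simp add: W.m_assoc)
      also have "\<dots> = f b" using fa fb by (simp add: W.m_assoc[symmetric])
      finally show ?thesis using fb by simp
    qed
  qed
qed


lemma vec_eq_scalar:
  fixes v1 v2 :: "'a :: semiring_1 vec"
  assumes "v1 \<in> carrier_vec n" "v2 \<in> carrier_vec n"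
    and "\<And>r. r \<in> carrier_vec n \<Longrightarrow> r \<bullet> v1 = r \<bullet> v2"
  shows "v1 = v2"
proof (rule eq_vecI)
  fix i assume "i < dim_vec v2"
  then have i: "i < n" using assms by auto
  show "v1 $ i = v2 $ i"
    using assms(3)[of "unit_vec n i"] scalar_prod_left_unit[OF assms(1) i]
      scalar_prod_left_unit[OF assms(2) i] by simp
qed (use assms in auto)

lemma vsum_scalar:
  fixes F :: "'b \<Rightarrow> complex vec"
  assumes r: "r \<in> carrier_vec n" and F: "\<And>s. s \<in> S \<Longrightarrow> F s \<in> carrier_vec n"
  shows "r \<bullet> vec n (\<lambda>j. \<Sum>s\<in>S. F s $ j) = (\<Sum>s\<in>S. r \<bullet> F s)"
proof -
  have "r \<bullet> vec n (\<lambda>j. \<Sum>s\<in>S. F s $ j) = (\<Sum>j<n. r $ j * (\<Sum>s\<in>S. F s $ j))"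
    unfolding scalar_prod_def by (simp add: atLeast0LessThan)
  also have "\<dots> = (\<Sum>j<n. \<Sum>s\<in>S. r $ j * F s $ j)" by (simp add: sum_distrib_left)
  also have "\<dots> = (\<Sum>s\<in>S. \<Sum>j<n. r $ j * F s $ j)" by (rule sum.swap)
  also have "\<dots> = (\<Sum>s\<in>S. r \<bullet> F s)"
  proof (rule sum.cong[OF refl])
    fix s assume "s \<in> S"
    then have "dim_vec (F s) = n" using F by auto
    then show "(\<Sum>j<n. r $ j * F s $ j) = r \<bullet> F s" by (simp add: scalar_prod_def atLeast0LessThan)
  qed
  finally show ?thesis .
qed

definition outsum :: "nat \<Rightarrow> 'b set \<Rightarrow> ('b \<Rightarrow> complex vec) \<Rightarrow> ('b \<Rightarrow> complex vec) \<Rightarrow> complex mat" where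
  "outsum n S a b = mat n n (\<lambda>(i,j). \<Sum>s\<in>S. a s $ i * b s $ j)"

lemma outsum_carrier[simp]: "outsum n S a b \<in> carrier_mat n n"
  unfolding outsum_def by simp

lemma outsum_scalar:
  assumes r: "r \<in> carrier_vec n" and u: "u \<in> carrier_vec n"
    and a: "\<And>s. s \<in> S \<Longrightarrow> a s \<in> carrier_vec n" and b: "\<And>s. s \<in> S \<Longrightarrow> b s \<in> carrier_vec n"
  shows "r \<bullet> (outsum n S a b *\<^sub>v u) = (\<Sum>s\<in>S. (r \<bullet> a s) * (b s \<bullet> u))"
proof -
  have e: "(outsum n S a b *\<^sub>v u) $ i = (\<Sum>j<n. (\<Sum>s\<in>S. a s $ i * b s $ j) * u $ j)" if "i < n" for i
    using that u unfolding outsum_def by (simp add: scalar_prod_def atLeast0LessThan row_def)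
  have "r \<bullet> (outsum n S a b *\<^sub>v u) = (\<Sum>i<n. r $ i * (\<Sum>j<n. (\<Sum>s\<in>S. a s $ i * b s $ j) * u $ j))"
    unfolding scalar_prod_def using e by (simp add: atLeast0LessThan outsum_def)
  also have "\<dots> = (\<Sum>i<n. \<Sum>j<n. \<Sum>s\<in>S. r $ i * a s $ i * (b s $ j * u $ j))"
    by (simp add: sum_distrib_left sum_distrib_right ac_simps)
  also have "\<dots> = (\<Sum>i<n. \<Sum>s\<in>S. \<Sum>j<n. r $ i * a s $ i * (b s $ j * u $ j))"
    by (rule sum.cong[OF refl], rule sum.swap)
  also have "\<dots> = (\<Sum>s\<in>S. \<Sum>i<n. \<Sum>j<n. r $ i * a s $ i * (b s $ j * u $ j))"
    by (rule sum.swap)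
  also have "\<dots> = (\<Sum>s\<in>S. (\<Sum>i<n. r $ i * a s $ i) * (\<Sum>j<n. b s $ j * u $ j))"
    by (simp add: sum_product)
  also have "\<dots> = (\<Sum>s\<in>S. (r \<bullet> a s) * (b s \<bullet> u))"
  proof (rule sum.cong[OF refl])
    fix s assume "s \<in> S"
    then have "dim_vec (a s) = n" using a by auto
    then show "(\<Sum>i<n. r $ i * a s $ i) * (\<Sum>j<n. b s $ j * u $ j) = (r \<bullet> a s) * (b s \<bullet> u)"
      using u by (simp add: scalar_prod_def atLeast0LessThan)
  qed
  finally show ?thesis .
qed

lemma mat_vec_zero[simp]: "A \<in> carrier_mat n n \<Longrightarrow> A *\<^sub>v 0\<^sub>v n = (0\<^sub>v n :: 'a :: semiring_0 vec)"
  by (rule eq_vecI) auto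

lemma rep_facts:
  assumes "representation G n \<rho>"
  shows "\<And>g. g \<in> carrier G \<Longrightarrow> \<rho> g \<in> carrier_mat n n"
    and "\<rho> \<one>\<^bsub>G\<^esub> = 1\<^sub>m n"
    and "\<And>g h. g \<in> carrier G \<Longrightarrow> h \<in> carrier G \<Longrightarrow> \<rho> (g \<otimes>\<^bsub>G\<^esub> h) = \<rho> g * \<rho> h"
  using assms unfolding representation_def by auto

lemma schur:
  assumes irr: "irreducible_rep G n \<rho>"
    and M: "M \<in> carrier_mat n n"
    and comm: "\<And>x u. x \<in> carrier G \<Longrightarrow> u \<in> carrier_vec n \<Longrightarrow> M *\<^sub>v (\<rho> x *\<^sub>v u) = \<rho> x *\<^sub>v (M *\<^sub>v u)"
  shows "\<exists>l. \<forall>u\<in>carrier_vec n. M *\<^sub>v u = l \<cdot>\<^sub>v u"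
proof -
  have rep: "representation G n \<rho>" and n: "n > 0"
    and irrU: "\<And>U. subspace_vec n U \<Longrightarrow> (\<forall>g\<in>carrier G. \<forall>u\<in>U. \<rho> g *\<^sub>v u \<in> U) \<Longrightarrow> U = {0\<^sub>v n} \<or> U = carrier_vec n"
    using irr unfolding irreducible_rep_def by auto
  note rf = rep_facts[OF rep]
  obtain l where "l \<in> spectrum M" using spectrum_non_empty[OF M n] by auto
  then obtain v where v: "v \<in> carrier_vec n" "v \<noteq> 0\<^sub>v n" "M *\<^sub>v v = l \<cdot>\<^sub>v v"
    using M unfolding spectrum_def eigenvalue_def eigenvector_def by auto
  define U where "U = {u \<in> carrier_vec n. M *\<^sub>v u = l \<cdot>\<^sub>v u}"
  have sub: "subspace_vec n U"
    unfolding subspace_vec_def U_def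
  proof (intro conjI ballI allI)
    show "{u \<in> carrier_vec n. M *\<^sub>v u = l \<cdot>\<^sub>v u} \<subseteq> carrier_vec n" by auto
    show "0\<^sub>v n \<in> {u \<in> carrier_vec n. M *\<^sub>v u = l \<cdot>\<^sub>v u}" using M by auto
  next
    fix u w assume "u \<in> {u \<in> carrier_vec n. M *\<^sub>v u = l \<cdot>\<^sub>v u}" "w \<in> {u \<in> carrier_vec n. M *\<^sub>v u = l \<cdot>\<^sub>v u}"
    then show "u + w \<in> {u \<in> carrier_vec n. M *\<^sub>v u = l \<cdot>\<^sub>v u}"
      using M by (auto simp: mult_add_distrib_mat_vec smult_add_distrib_vec)
  next
    fix c u assume "u \<in> {u \<in> carrier_vec n. M *\<^sub>v u = l \<cdot>\<^sub>v u}"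
    then show "c \<cdot>\<^sub>v u \<in> {u \<in> carrier_vec n. M *\<^sub>v u = l \<cdot>\<^sub>v u}"
      using M by (auto simp: mult_mat_vec smult_smult_assoc mult.commute)
  qed
  have inv: "\<forall>g\<in>carrier G. \<forall>u\<in>U. \<rho> g *\<^sub>v u \<in> U"
  proof (intro ballI)
    fix g u assume g: "g \<in> carrier G" and u: "u \<in> U"
    then have uc: "u \<in> carrier_vec n" and Mu: "M *\<^sub>v u = l \<cdot>\<^sub>v u" unfolding U_def by auto
    have "M *\<^sub>v (\<rho> g *\<^sub>v u) = \<rho> g *\<^sub>v (l \<cdot>\<^sub>v u)" using comm[OF g uc] Mu by simp
    also have "\<dots> = l \<cdot>\<^sub>v (\<rho> g *\<^sub>v u)" using mult_mat_vec[OF rf(1)[OF g] uc] .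
    finally show "\<rho> g *\<^sub>v u \<in> U" unfolding U_def using rf(1)[OF g] uc by auto
  qed
  have "U \<noteq> {0\<^sub>v n}" using v unfolding U_def by auto
  then have "U = carrier_vec n" using irrU[OF sub inv] by auto
  then show ?thesis unfolding U_def by auto
qed





lemma (in group) gelfand_rep:
  assumes fin: "finite (carrier G)"
    and Ksub: "subgroup K G"
    and ahom: "\<alpha> \<in> hom G G" and ainv: "\<And>h. h \<in> carrier G \<Longrightarrow> \<alpha> (\<alpha> h) = h"
    and star: "\<And>z. z \<in> carrier G \<Longrightarrow> \<exists>k\<in>K. \<alpha> (inv z) = k \<otimes> z \<otimes> k"
    and irr: "irreducible_rep G n \<rho>"
  shows "dim_le_one n (Hom_triv K n \<rho>)"
proof -
  have rep: "representation G n \<rho>" and n: "n > 0"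
    and irrU: "\<And>U. subspace_vec n U \<Longrightarrow> (\<forall>g\<in>carrier G. \<forall>u\<in>U. \<rho> g *\<^sub>v u \<in> U) \<Longrightarrow> U = {0\<^sub>v n} \<or> U = carrier_vec n"
    using irr unfolding irreducible_rep_def by auto
  note rf = rep_facts[OF rep]
  have rc: "\<And>g. g \<in> carrier G \<Longrightarrow> \<rho> g \<in> carrier_mat n n" by (rule rf(1))
  have rv: "\<rho> x *\<^sub>v (\<rho> y *\<^sub>v u) = \<rho> (x \<otimes> y) *\<^sub>v u"
    if "x \<in> carrier G" "y \<in> carrier G" "u \<in> carrier_vec n" for x y u
    using that rf(3)[of x y] rc[of x] rc[of y] by simp
  have rtc: "transpose_mat (\<rho> y) *\<^sub>v u \<in> carrier_vec n" if "y \<in> carrier G" "u \<in> carrier_vec n" for y u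
    by (rule mult_mat_vec_carrier[of _ n n]) (use that rc in auto)
  have r1: "\<rho> \<one> *\<^sub>v u = u" if "u \<in> carrier_vec n" for u using rf(2) that by simp
  have rvc: "\<rho> x *\<^sub>v u \<in> carrier_vec n" if "x \<in> carrier G" "u \<in> carrier_vec n" for x u
    using rc[OF that(1)] that(2) by simp
  interpret K: subgroup K G by (rule Ksub)
  have Kc: "K \<subseteq> carrier G" by (rule K.subset)
  have finK: "finite K" using finite_subset[OF Kc fin] .
  interpret ah: group_hom G G \<alpha> using ahom by unfold_locales
  have ac: "\<alpha> x \<in> carrier G" if "x \<in> carrier G" for x using that by simp
  have ai: "\<alpha> (inv x) = inv (\<alpha> x)" if "x \<in> carrier G" for x using that ah.hom_inv by simp
  define L where "L = Hom_triv K n \<rho>"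
  have Lc: "f \<in> carrier_vec n" if "f \<in> L" for f using that unfolding L_def Hom_triv_def by auto
  have Linv: "f \<bullet> (\<rho> k *\<^sub>v u) = f \<bullet> u" if "f \<in> L" "k \<in> K" "u \<in> carrier_vec n" for f k u
    using that unfolding L_def Hom_triv_def by auto
  show ?thesis
  proof (cases "L \<subseteq> {0\<^sub>v n}")
    case True
    have "0\<^sub>v n = (0::complex) \<cdot>\<^sub>v 0\<^sub>v n" by (rule eq_vecI) auto
    then have "L \<subseteq> {c \<cdot>\<^sub>v 0\<^sub>v n | c. True}" using True by auto
    then show ?thesis unfolding dim_le_one_def L_def[symmetric] by (intro bexI[of _ "0\<^sub>v n"]) auto
  next
    case False
    then obtain f1 where f1L: "f1 \<in> L" and f1nz: "f1 \<noteq> 0\<^sub>v n" by auto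
    have f1c: "f1 \<in> carrier_vec n" using Lc[OF f1L] .
    obtain i where i: "i < n" "f1 $ i \<noteq> 0"
    proof -
      have "\<exists>i<n. f1 $ i \<noteq> 0"
      proof (rule ccontr)
        assume "\<not> (\<exists>i<n. f1 $ i \<noteq> 0)"
        then have "f1 = 0\<^sub>v n" using f1c by (intro eq_vecI) auto
        then show False using f1nz by simp
      qed
      then show ?thesis using that by auto
    qed
    define v where "v = (unit_vec n i :: complex vec)"
    have vc: "v \<in> carrier_vec n" unfolding v_def by simp
    define w where "w = vec n (\<lambda>j. \<Sum>k\<in>K. (\<rho> k *\<^sub>v v) $ j)"
    have wc: "w \<in> carrier_vec n" unfolding w_def by simp
    have wsc: "r \<bullet> w = (\<Sum>k\<in>K. r \<bullet> (\<rho> k *\<^sub>v v))" if "r \<in> carrier_vec n" for r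
      unfolding w_def using vsum_scalar[OF that, of K "\<lambda>k. \<rho> k *\<^sub>v v"] rvc vc Kc by auto
    have wK: "\<rho> k0 *\<^sub>v w = w" if k0: "k0 \<in> K" for k0
    proof (rule vec_eq_scalar[OF rvc wc])
      show "k0 \<in> carrier G" using k0 Kc by auto
      show "w \<in> carrier_vec n" by (rule wc)
      fix r :: "complex vec" assume r: "r \<in> carrier_vec n"
      have k0c: "k0 \<in> carrier G" using k0 Kc by auto
      have rt: "transpose_mat (\<rho> k0) *\<^sub>v r \<in> carrier_vec n" using rc[OF k0c] r by simp
      have "r \<bullet> (\<rho> k0 *\<^sub>v w) = (transpose_mat (\<rho> k0) *\<^sub>v r) \<bullet> w"
        using transpose_vec_mult_scalar[OF rc[OF k0c] wc r] by simp
      also have "\<dots> = (\<Sum>k\<in>K. (transpose_mat (\<rho> k0) *\<^sub>v r) \<bullet> (\<rho> k *\<^sub>v v))" using wsc[OF rt] .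
      also have "\<dots> = (\<Sum>k\<in>K. r \<bullet> (\<rho> (k0 \<otimes> k) *\<^sub>v v))"
      proof (rule sum.cong[OF refl])
        fix k assume k: "k \<in> K"
        then have kc: "k \<in> carrier G" using Kc by auto
        show "(transpose_mat (\<rho> k0) *\<^sub>v r) \<bullet> (\<rho> k *\<^sub>v v) = r \<bullet> (\<rho> (k0 \<otimes> k) *\<^sub>v v)"
          using transpose_vec_mult_scalar[OF rc[OF k0c] rvc[OF kc vc] r] rv[OF k0c kc vc] by simp
      qed
      also have "\<dots> = (\<Sum>k\<in>K. r \<bullet> (\<rho> k *\<^sub>v v))"
        by (rule sum.reindex_bij_witness[of _ "\<lambda>k. inv k0 \<otimes> k" "\<lambda>k. k0 \<otimes> k"])
          (use k0 Kc in \<open>auto simp: K.m_closed K.m_inv_closed\<close>)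
      also have "\<dots> = r \<bullet> w" using wsc[OF r] by simp
      finally show "r \<bullet> (\<rho> k0 *\<^sub>v w) = r \<bullet> w" .
    qed
    have cardK: "card K > 0" using finK K.one_closed card_gt_0_iff by blast
    have f1w: "f1 \<bullet> w = of_nat (card K) * f1 $ i"
    proof -
      have "f1 \<bullet> w = (\<Sum>k\<in>K. f1 \<bullet> (\<rho> k *\<^sub>v v))" using wsc[OF f1c] .
      also have "\<dots> = (\<Sum>k\<in>K. f1 \<bullet> v)" using Linv[OF f1L _ vc] by simp
      also have "\<dots> = of_nat (card K) * f1 $ i" unfolding v_def using i by simp
      finally show ?thesis .
    qed
    have f1wnz: "f1 \<bullet> w \<noteq> 0" using f1w cardK i by simp
    have wnz: "w \<noteq> 0\<^sub>v n" using f1wnz f1c by auto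
    define \<phi> where "\<phi> f x = f \<bullet> (\<rho> x *\<^sub>v w)" for f x
    have phistar: "\<phi> f (\<alpha> (inv z)) = \<phi> f z" if f: "f \<in> L" and z: "z \<in> carrier G" for f z
    proof -
      obtain k where k: "k \<in> K" and e: "\<alpha> (inv z) = k \<otimes> z \<otimes> k" using star[OF z] by auto
      have kc: "k \<in> carrier G" using k Kc by auto
      have "\<rho> (k \<otimes> z \<otimes> k) *\<^sub>v w = \<rho> k *\<^sub>v (\<rho> z *\<^sub>v (\<rho> k *\<^sub>v w))"
        using rv kc z wc rvc by (simp add: m_assoc)
      also have "\<dots> = \<rho> k *\<^sub>v (\<rho> z *\<^sub>v w)" using wK[OF k] by simp
      finally show ?thesis unfolding \<phi>_def e using Linv[OF f k rvc[OF z wc]] by simp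
    qed
    have lam_ex: "\<exists>l. \<forall>r\<in>carrier_vec n. \<forall>u\<in>carrier_vec n.
        (\<Sum>y\<in>carrier G. (r \<bullet> (\<rho> y *\<^sub>v w)) * (f \<bullet> (\<rho> (inv y) *\<^sub>v u))) = l * (r \<bullet> u)"
      if f: "f \<in> L" for f
    proof -
      have fc: "f \<in> carrier_vec n" using Lc[OF f] .
      define M where "M = outsum n (carrier G) (\<lambda>y. \<rho> y *\<^sub>v w) (\<lambda>y. transpose_mat (\<rho> (inv y)) *\<^sub>v f)"
      have Mc: "M \<in> carrier_mat n n" unfolding M_def by simp
      have Mu: "M *\<^sub>v u \<in> carrier_vec n" if "u \<in> carrier_vec n" for u
        by (rule mult_mat_vec_carrier[OF Mc that])
      have Msc: "r \<bullet> (M *\<^sub>v u) = (\<Sum>y\<in>carrier G. (r \<bullet> (\<rho> y *\<^sub>v w)) * (f \<bullet> (\<rho> (inv y) *\<^sub>v u)))"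
        if r: "r \<in> carrier_vec n" and u: "u \<in> carrier_vec n" for r u
        unfolding M_def
      proof (subst outsum_scalar[OF r u])
        show "\<And>s. s \<in> carrier G \<Longrightarrow> \<rho> s *\<^sub>v w \<in> carrier_vec n" using rvc wc by auto
        show "\<And>s. s \<in> carrier G \<Longrightarrow> transpose_mat (\<rho> (inv s)) *\<^sub>v f \<in> carrier_vec n"
          using rtc fc by simp
        show "(\<Sum>s\<in>carrier G. (r \<bullet> (\<rho> s *\<^sub>v w)) * ((transpose_mat (\<rho> (inv s)) *\<^sub>v f) \<bullet> u)) =
          (\<Sum>y\<in>carrier G. (r \<bullet> (\<rho> y *\<^sub>v w)) * (f \<bullet> (\<rho> (inv y) *\<^sub>v u)))"
          using transpose_vec_mult_scalar[OF rc u fc] by simp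
      qed
      have comm: "M *\<^sub>v (\<rho> x *\<^sub>v u) = \<rho> x *\<^sub>v (M *\<^sub>v u)" if x: "x \<in> carrier G" and u: "u \<in> carrier_vec n" for x u
      proof (rule vec_eq_scalar)
        show "M *\<^sub>v (\<rho> x *\<^sub>v u) \<in> carrier_vec n" by (rule mult_mat_vec_carrier[OF Mc rvc[OF x u]])
        show "\<rho> x *\<^sub>v (M *\<^sub>v u) \<in> carrier_vec n" by (rule mult_mat_vec_carrier[OF rc[OF x] mult_mat_vec_carrier[OF Mc u]])
        fix r :: "complex vec" assume r: "r \<in> carrier_vec n"
        have rt: "transpose_mat (\<rho> x) *\<^sub>v r \<in> carrier_vec n" using rc[OF x] r by simp
        have "r \<bullet> (M *\<^sub>v (\<rho> x *\<^sub>v u)) = (\<Sum>y\<in>carrier G. (r \<bullet> (\<rho> y *\<^sub>v w)) * (f \<bullet> (\<rho> (inv y \<otimes> x) *\<^sub>v u)))"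
          using Msc[OF r rvc[OF x u]] rv x u by simp
        also have "\<dots> = (\<Sum>y\<in>carrier G. (r \<bullet> (\<rho> (x \<otimes> y) *\<^sub>v w)) * (f \<bullet> (\<rho> (inv y) *\<^sub>v u)))"
          by (rule sum.reindex_bij_witness[of _ "\<lambda>y. x \<otimes> y" "\<lambda>y. inv x \<otimes> y"])
            (use x in \<open>auto simp: m_assoc[symmetric] inv_mult_group\<close>)
        also have "\<dots> = (\<Sum>y\<in>carrier G. ((transpose_mat (\<rho> x) *\<^sub>v r) \<bullet> (\<rho> y *\<^sub>v w)) * (f \<bullet> (\<rho> (inv y) *\<^sub>v u)))"
        proof (rule sum.cong[OF refl])
          fix y assume y: "y \<in> carrier G"
          show "(r \<bullet> (\<rho> (x \<otimes> y) *\<^sub>v w)) * (f \<bullet> (\<rho> (inv y) *\<^sub>v u)) =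
            ((transpose_mat (\<rho> x) *\<^sub>v r) \<bullet> (\<rho> y *\<^sub>v w)) * (f \<bullet> (\<rho> (inv y) *\<^sub>v u))"
            using transpose_vec_mult_scalar[OF rc[OF x] rvc[OF y wc] r] rv[OF x y wc] by simp
        qed
        also have "\<dots> = (transpose_mat (\<rho> x) *\<^sub>v r) \<bullet> (M *\<^sub>v u)" using Msc[OF rt u] by simp
        also have "\<dots> = r \<bullet> (\<rho> x *\<^sub>v (M *\<^sub>v u))"
          using transpose_vec_mult_scalar[OF rc[OF x] Mu[OF u] r] .
        finally show "r \<bullet> (M *\<^sub>v (\<rho> x *\<^sub>v u)) = r \<bullet> (\<rho> x *\<^sub>v (M *\<^sub>v u))" .
      qed
      obtain l where l: "\<forall>u\<in>carrier_vec n. M *\<^sub>v u = l \<cdot>\<^sub>v u" using schur[OF irr Mc comm] by blast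
      show ?thesis
      proof (intro exI[of _ l] ballI)
        fix r u :: "complex vec" assume r: "r \<in> carrier_vec n" and u: "u \<in> carrier_vec n"
        show "(\<Sum>y\<in>carrier G. (r \<bullet> (\<rho> y *\<^sub>v w)) * (f \<bullet> (\<rho> (inv y) *\<^sub>v u))) = l * (r \<bullet> u)"
          using Msc[OF r u] l u r by simp
      qed
    qed
    have "\<exists>lam. \<forall>f\<in>L. \<forall>r\<in>carrier_vec n. \<forall>u\<in>carrier_vec n.
        (\<Sum>y\<in>carrier G. (r \<bullet> (\<rho> y *\<^sub>v w)) * (f \<bullet> (\<rho> (inv y) *\<^sub>v u))) = lam f * (r \<bullet> u)"
      by (rule bchoice, rule ballI, rule lam_ex)
    then obtain lam where lam0: "\<forall>f\<in>L. \<forall>r\<in>carrier_vec n. \<forall>u\<in>carrier_vec n.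
        (\<Sum>y\<in>carrier G. (r \<bullet> (\<rho> y *\<^sub>v w)) * (f \<bullet> (\<rho> (inv y) *\<^sub>v u))) = lam f * (r \<bullet> u)"
      by (elim exE)
    have lam: "(\<Sum>y\<in>carrier G. (r \<bullet> (\<rho> y *\<^sub>v w)) * (f \<bullet> (\<rho> (inv y) *\<^sub>v u))) = lam f * (r \<bullet> u)"
      if "f \<in> L" "r \<in> carrier_vec n" "u \<in> carrier_vec n" for f r u
      using lam0 that by blast
    have c12: "(\<Sum>y\<in>carrier G. \<phi> f1 y * \<phi> f2 (inv y \<otimes> x)) = lam f2 * \<phi> f1 x"
      if f1: "f1 \<in> L" and f2: "f2 \<in> L" and x: "x \<in> carrier G" for f1 f2 x
    proof -
      have "(\<Sum>y\<in>carrier G. \<phi> f1 y * \<phi> f2 (inv y \<otimes> x))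
          = (\<Sum>y\<in>carrier G. (f1 \<bullet> (\<rho> y *\<^sub>v w)) * (f2 \<bullet> (\<rho> (inv y) *\<^sub>v (\<rho> x *\<^sub>v w))))"
        unfolding \<phi>_def by (rule sum.cong[OF refl]) (use rv x wc in simp)
      also have "\<dots> = lam f2 * \<phi> f1 x" unfolding \<phi>_def
        by (rule lam[OF f2 Lc[OF f1] rvc[OF x wc]])
      finally show ?thesis .
    qed
    have gel: "lam f2 * \<phi> f1 x = lam f1 * \<phi> f2 x"
      if f1: "f1 \<in> L" and f2: "f2 \<in> L" and x: "x \<in> carrier G" for f1 f2 x
    proof -
      have xs: "\<alpha> (inv x) \<in> carrier G" using x by simp
      have "lam f2 * \<phi> f1 x = lam f2 * \<phi> f1 (\<alpha> (inv x))" using phistar[OF f1 x] by simp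
      also have "\<dots> = (\<Sum>y\<in>carrier G. \<phi> f1 y * \<phi> f2 (inv y \<otimes> \<alpha> (inv x)))"
        using c12[OF f1 f2 xs] by simp
      also have "\<dots> = (\<Sum>y\<in>carrier G. \<phi> f1 (\<alpha> (inv y)) * \<phi> f2 (x \<otimes> \<alpha> y))"
      proof (rule sum.cong[OF refl])
        fix y assume y: "y \<in> carrier G"
        have e: "\<alpha> (inv (inv y \<otimes> \<alpha> (inv x))) = x \<otimes> \<alpha> y"
          using x y by (simp add: inv_mult_group ai ainv)
        have "\<phi> f2 (inv y \<otimes> \<alpha> (inv x)) = \<phi> f2 (x \<otimes> \<alpha> y)"
          using phistar[OF f2, of "inv y \<otimes> \<alpha> (inv x)"] e y xs by simp
        then show "\<phi> f1 y * \<phi> f2 (inv y \<otimes> \<alpha> (inv x)) = \<phi> f1 (\<alpha> (inv y)) * \<phi> f2 (x \<otimes> \<alpha> y)"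
          using phistar[OF f1 y] by simp
      qed
      also have "\<dots> = (\<Sum>u\<in>carrier G. \<phi> f2 u * \<phi> f1 (inv u \<otimes> x))"
      proof (rule sum.reindex_bij_witness[of _ "\<lambda>u. \<alpha> (inv x \<otimes> u)" "\<lambda>y. x \<otimes> \<alpha> y"])
        fix y assume y: "y \<in> carrier G"
        show "\<alpha> (inv x \<otimes> (x \<otimes> \<alpha> y)) = y" using x y by (simp add: ainv)
        show "x \<otimes> \<alpha> y \<in> carrier G" using x y by simp
        have "inv (x \<otimes> \<alpha> y) \<otimes> x = \<alpha> (inv y)" using x y by (simp add: inv_mult_group m_assoc ai)
        then show "\<phi> f2 (x \<otimes> \<alpha> y) * \<phi> f1 (inv (x \<otimes> \<alpha> y) \<otimes> x) = \<phi> f1 (\<alpha> (inv y)) * \<phi> f2 (x \<otimes> \<alpha> y)"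
          by simp
      next
        fix u assume u: "u \<in> carrier G"
        show "x \<otimes> \<alpha> (\<alpha> (inv x \<otimes> u)) = u" using x u by (simp add: ainv)
        show "\<alpha> (inv x \<otimes> u) \<in> carrier G" using x u by simp
      qed
      also have "\<dots> = lam f1 * \<phi> f2 x" using c12[OF f2 f1 x] by simp
      finally show ?thesis .
    qed
    have tr: "of_nat n * lam f = of_nat (card (carrier G)) * (f \<bullet> w)" if f: "f \<in> L" for f
    proof -
      have fc: "f \<in> carrier_vec n" using Lc[OF f] .
      have li: "lam f = (\<Sum>y\<in>carrier G. (\<rho> y *\<^sub>v w) $ j * (transpose_mat (\<rho> (inv y)) *\<^sub>v f) $ j)"
        if j: "j < n" for j
      proof -
        have "lam f = lam f * (unit_vec n j \<bullet> unit_vec n j)" using j by simp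
        also have "\<dots> = (\<Sum>y\<in>carrier G. (unit_vec n j \<bullet> (\<rho> y *\<^sub>v w)) * (f \<bullet> (\<rho> (inv y) *\<^sub>v unit_vec n j)))"
          using lam[OF f, of "unit_vec n j" "unit_vec n j"] by simp
        also have "\<dots> = (\<Sum>y\<in>carrier G. (\<rho> y *\<^sub>v w) $ j * (transpose_mat (\<rho> (inv y)) *\<^sub>v f) $ j)"
        proof (rule sum.cong[OF refl])
          fix y assume y: "y \<in> carrier G"
          have "f \<bullet> (\<rho> (inv y) *\<^sub>v unit_vec n j) = (transpose_mat (\<rho> (inv y)) *\<^sub>v f) \<bullet> unit_vec n j"
            using transpose_vec_mult_scalar[OF rc[of "inv y"] unit_vec_carrier fc] y by simp
          also have "\<dots> = (transpose_mat (\<rho> (inv y)) *\<^sub>v f) $ j" using j by simp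
          finally show "(unit_vec n j \<bullet> (\<rho> y *\<^sub>v w)) * (f \<bullet> (\<rho> (inv y) *\<^sub>v unit_vec n j)) =
              (\<rho> y *\<^sub>v w) $ j * (transpose_mat (\<rho> (inv y)) *\<^sub>v f) $ j"
            using scalar_prod_left_unit[OF rvc[OF y wc] j] by simp
        qed
        finally show ?thesis .
      qed
      have "of_nat n * lam f = (\<Sum>j<n. lam f)" by simp
      also have "\<dots> = (\<Sum>j<n. \<Sum>y\<in>carrier G. (\<rho> y *\<^sub>v w) $ j * (transpose_mat (\<rho> (inv y)) *\<^sub>v f) $ j)"
        using li by simp
      also have "\<dots> = (\<Sum>y\<in>carrier G. \<Sum>j<n. (transpose_mat (\<rho> (inv y)) *\<^sub>v f) $ j * (\<rho> y *\<^sub>v w) $ j)"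
        by (subst sum.swap) (simp add: mult.commute)
      also have "\<dots> = (\<Sum>y\<in>carrier G. f \<bullet> w)"
      proof (rule sum.cong[OF refl])
        fix y assume y: "y \<in> carrier G"
        have "(\<Sum>j<n. (transpose_mat (\<rho> (inv y)) *\<^sub>v f) $ j * (\<rho> y *\<^sub>v w) $ j)
            = (transpose_mat (\<rho> (inv y)) *\<^sub>v f) \<bullet> (\<rho> y *\<^sub>v w)"
          using rvc[OF y wc] by (simp only: scalar_prod_def carrier_vecD atLeast0LessThan)
        also have "\<dots> = f \<bullet> (\<rho> (inv y) *\<^sub>v (\<rho> y *\<^sub>v w))"
          using transpose_vec_mult_scalar[OF rc[of "inv y"] rvc[OF y wc] fc] y by simp
        also have "\<dots> = f \<bullet> w" using rv[of "inv y" y w] y wc r1 by simp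
        finally show "(\<Sum>j<n. (transpose_mat (\<rho> (inv y)) *\<^sub>v f) $ j * (\<rho> y *\<^sub>v w) $ j) = f \<bullet> w" .
      qed
      also have "\<dots> = of_nat (card (carrier G)) * (f \<bullet> w)" by simp
      finally show ?thesis .
    qed
    have cardG: "card (carrier G) > 0" using fin one_closed card_gt_0_iff by blast
    have lam1: "lam f1 \<noteq> 0" using tr[OF f1L] cardG f1wnz by auto
    have main: "f2 = (lam f2 / lam f1) \<cdot>\<^sub>v f1" if f2: "f2 \<in> L" for f2
    proof -
      have f2c: "f2 \<in> carrier_vec n" using Lc[OF f2] .
      define gv where "gv = lam f2 \<cdot>\<^sub>v f1 - lam f1 \<cdot>\<^sub>v f2"
      have gvc: "gv \<in> carrier_vec n" unfolding gv_def using f1c f2c by simp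
      have gvx: "gv \<bullet> (\<rho> x *\<^sub>v w) = 0" if x: "x \<in> carrier G" for x
      proof -
        have "gv \<bullet> (\<rho> x *\<^sub>v w) = lam f2 * \<phi> f1 x - lam f1 * \<phi> f2 x"
          unfolding gv_def \<phi>_def
          using minus_scalar_prod_distrib[of "lam f2 \<cdot>\<^sub>v f1" n "lam f1 \<cdot>\<^sub>v f2" "\<rho> x *\<^sub>v w"]
            f1c f2c rvc[OF x wc] by simp
        then show ?thesis using gel[OF f1L f2 x] by simp
      qed
      define U where "U = {u \<in> carrier_vec n. \<forall>x\<in>carrier G. gv \<bullet> (\<rho> x *\<^sub>v u) = 0}"
      have sub: "subspace_vec n U"
        unfolding subspace_vec_def
      proof (intro conjI ballI allI)
        show "U \<subseteq> carrier_vec n" unfolding U_def by auto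
        show "0\<^sub>v n \<in> U" unfolding U_def using rc gvc by simp
      next
        fix u u' assume "u \<in> U" "u' \<in> U"
        then have uc: "u \<in> carrier_vec n" and u'c: "u' \<in> carrier_vec n"
          and hu: "\<forall>x\<in>carrier G. gv \<bullet> (\<rho> x *\<^sub>v u) = 0" and hu': "\<forall>x\<in>carrier G. gv \<bullet> (\<rho> x *\<^sub>v u') = 0"
          unfolding U_def by auto
        have "gv \<bullet> (\<rho> x *\<^sub>v (u + u')) = 0" if x: "x \<in> carrier G" for x
        proof -
          have "gv \<bullet> (\<rho> x *\<^sub>v (u + u')) = gv \<bullet> (\<rho> x *\<^sub>v u + \<rho> x *\<^sub>v u')"
            using mult_add_distrib_mat_vec[OF rc[OF x] uc u'c] by simp
          also have "\<dots> = gv \<bullet> (\<rho> x *\<^sub>v u) + gv \<bullet> (\<rho> x *\<^sub>v u')"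
            by (rule scalar_prod_add_distrib[OF gvc rvc[OF x uc] rvc[OF x u'c]])
          finally show ?thesis using hu hu' x by simp
        qed
        then show "u + u' \<in> U" unfolding U_def using uc u'c by simp
      next
        fix c u assume "u \<in> U"
        then have uc: "u \<in> carrier_vec n"
          and hu: "\<forall>x\<in>carrier G. gv \<bullet> (\<rho> x *\<^sub>v u) = 0"
          unfolding U_def by auto
        have "gv \<bullet> (\<rho> x *\<^sub>v (c \<cdot>\<^sub>v u)) = 0" if x: "x \<in> carrier G" for x
        proof -
          have "gv \<bullet> (\<rho> x *\<^sub>v (c \<cdot>\<^sub>v u)) = gv \<bullet> (c \<cdot>\<^sub>v (\<rho> x *\<^sub>v u))"
            using mult_mat_vec[OF rc[OF x] uc] by simp
          also have "\<dots> = c * (gv \<bullet> (\<rho> x *\<^sub>v u))"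
            by (rule scalar_prod_smult_distrib[OF gvc rvc[OF x uc]])
          finally show ?thesis using hu x by simp
        qed
        then show "c \<cdot>\<^sub>v u \<in> U" unfolding U_def using uc by simp
      qed
      have inv: "\<forall>g\<in>carrier G. \<forall>u\<in>U. \<rho> g *\<^sub>v u \<in> U"
        unfolding U_def using rvc rv by auto
      have "w \<in> U" unfolding U_def using wc gvx by auto
      then have "U \<noteq> {0\<^sub>v n}" using wnz by auto
      then have "U = carrier_vec n" using irrU[OF sub inv] by auto
      then have gz: "gv \<bullet> u = 0" if "u \<in> carrier_vec n" for u
        using that r1 unfolding U_def by force
      have comp: "lam f2 * f1 $ j - lam f1 * f2 $ j = 0" if j: "j < n" for j
      proof -
        have "gv $ j = 0" using gz[of "unit_vec n j"] scalar_prod_right_unit[OF j, of gv] by simp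
        moreover have "gv $ j = lam f2 * f1 $ j - lam f1 * f2 $ j"
          unfolding gv_def using j f1c f2c by simp
        ultimately show ?thesis by simp
      qed
      show ?thesis
      proof (rule eq_vecI)
        fix j assume "j < dim_vec ((lam f2 / lam f1) \<cdot>\<^sub>v f1)"
        then have j: "j < n" using f1c by simp
        show "f2 $ j = ((lam f2 / lam f1) \<cdot>\<^sub>v f1) $ j"
          using comp[OF j] lam1 j f1c by (simp add: field_simps)
      qed (use f1c f2c in simp)
    qed
    show ?thesis unfolding dim_le_one_def L_def[symmetric]
      using main f1c by blast
  qed
qed


lemma (in group) main_thm:
  fixes W :: "('w, 'm) monoid_scheme"
    and B :: "'w \<Rightarrow> 'w \<Rightarrow> int" and p :: nat and \<alpha> :: "'a \<Rightarrow> 'a"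
  assumes "Factorial_Ring.prime p" and "odd p"
    and "group G"
    and "heisenberg_p_group G p W B"
    and "\<alpha> \<in> iso G G"
    and "\<forall>h\<in>carrier G. \<alpha> (\<alpha> h) = h"
  shows "(\<forall>h\<in>carrier G.
            fixed_points G \<alpha> <#> {\<alpha> h} <#> fixed_points G \<alpha>
          = fixed_points G \<alpha> <#> {inv h} <#> fixed_points G \<alpha>)
       \<and> (\<forall>n (\<rho> :: 'a \<Rightarrow> complex mat). irreducible_rep G n \<rho> \<longrightarrow>
            dim_le_one n (Hom_triv (fixed_points G \<alpha>) n \<rho>))"
proof -
  note pr = assms(1) and od = assms(2) and gH = assms(3) and hp = assms(4)
  have fin: "finite (carrier G)" by (rule heis_facts(1)[OF pr od gH hp])
  have expo: "\<And>x. x \<in> carrier G \<Longrightarrow> x [^] p = \<one>" by (rule heis_facts(2)[OF pr od gH hp])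
  have comm: "\<And>a b y. a \<in> carrier G \<Longrightarrow> b \<in> carrier G \<Longrightarrow> y \<in> carrier G \<Longrightarrow>
         (inv a \<otimes> b \<otimes> a \<otimes> inv b) \<otimes> y = y \<otimes> (inv a \<otimes> b \<otimes> a \<otimes> inv b)"
    by (rule heis_facts(3)[OF pr od gH hp])
  have ahom: "\<alpha> \<in> hom G G" using assms(5) unfolding iso_def by auto
  have ainv: "\<And>h. h \<in> carrier G \<Longrightarrow> \<alpha> (\<alpha> h) = h" using assms(6) by auto
  interpret ah: group_hom G G \<alpha> using ahom by unfold_locales
  define K where "K = fixed_points G \<alpha>"
  have Ksub: "subgroup K G"
  proof
    show "K \<subseteq> carrier G" unfolding K_def fixed_points_def by auto
    show "\<one> \<in> K" unfolding K_def fixed_points_def by simp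
    fix x y assume "x \<in> K" "y \<in> K"
    then show "x \<otimes> y \<in> K" unfolding K_def fixed_points_def by auto
  next
    fix x assume "x \<in> K"
    then show "inv x \<in> K" unfolding K_def fixed_points_def by (auto simp: ah.hom_inv)
  qed
  interpret K: subgroup K G by (rule Ksub)
  have dec: "\<exists>k\<in>K. \<alpha> g = k \<otimes> inv g \<otimes> k" if g: "g \<in> carrier G" for g
  proof -
    obtain k where k: "k \<in> carrier G" "\<alpha> k = k" "\<alpha> g = k \<otimes> inv g \<otimes> k"
      using key_decomp[OF od expo comm ahom ainv g] by blast
    then show ?thesis unfolding K_def fixed_points_def by auto
  qed
  have part1: "K <#> {\<alpha> h} <#> K = K <#> {inv h} <#> K" if h: "h \<in> carrier G" for h
  proof -
    obtain k where k: "k \<in> K" and e: "\<alpha> h = k \<otimes> inv h \<otimes> k" using dec[OF h] by auto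
    have kc: "k \<in> carrier G" using k K.subset by auto
    have ds: "K <#> {y} <#> K = {a \<otimes> y \<otimes> b | a b. a \<in> K \<and> b \<in> K}" for y
      unfolding set_mult_def by blast
    show ?thesis unfolding ds
    proof (intro equalityI subsetI)
      fix z assume "z \<in> {a \<otimes> \<alpha> h \<otimes> b | a b. a \<in> K \<and> b \<in> K}"
      then obtain a b where ab: "a \<in> K" "b \<in> K" "z = a \<otimes> \<alpha> h \<otimes> b" by auto
      have ac: "a \<in> carrier G" and bc: "b \<in> carrier G" using ab K.subset by auto
      have "z = (a \<otimes> k) \<otimes> inv h \<otimes> (k \<otimes> b)" using ab(3) e ac bc kc h by (simp add: m_assoc)
      moreover have "a \<otimes> k \<in> K" "k \<otimes> b \<in> K" using ab k by auto
      ultimately show "z \<in> {a \<otimes> inv h \<otimes> b | a b. a \<in> K \<and> b \<in> K}" by blast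
    next
      fix z assume "z \<in> {a \<otimes> inv h \<otimes> b | a b. a \<in> K \<and> b \<in> K}"
      then obtain a b where ab: "a \<in> K" "b \<in> K" "z = a \<otimes> inv h \<otimes> b" by auto
      have ac: "a \<in> carrier G" and bc: "b \<in> carrier G" using ab K.subset by auto
      have "(a \<otimes> inv k) \<otimes> \<alpha> h \<otimes> (inv k \<otimes> b) = a \<otimes> (inv k \<otimes> (k \<otimes> (inv h \<otimes> (k \<otimes> (inv k \<otimes> b)))))"
        using e ac bc kc h by (simp add: m_assoc)
      also have "\<dots> = z" using ab(3) ac bc kc h by (simp add: m_assoc)
      finally have "z = (a \<otimes> inv k) \<otimes> \<alpha> h \<otimes> (inv k \<otimes> b)" by simp
      moreover have "a \<otimes> inv k \<in> K" "inv k \<otimes> b \<in> K" using ab k by auto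
      ultimately show "z \<in> {a \<otimes> \<alpha> h \<otimes> b | a b. a \<in> K \<and> b \<in> K}" by blast
    qed
  qed
  have star: "\<exists>k\<in>K. \<alpha> (inv z) = k \<otimes> z \<otimes> k" if z: "z \<in> carrier G" for z
    using dec[of "inv z"] z by simp
  show ?thesis
  proof (intro conjI ballI allI impI)
    fix h assume "h \<in> carrier G"
    then show "fixed_points G \<alpha> <#> {\<alpha> h} <#> fixed_points G \<alpha> =
               fixed_points G \<alpha> <#> {inv h} <#> fixed_points G \<alpha>"
      using part1 unfolding K_def by simp
  next
    fix n and \<rho> :: "'a \<Rightarrow> complex mat" assume irr: "irreducible_rep G n \<rho>"
    show "dim_le_one n (Hom_triv (fixed_points G \<alpha>) n \<rho>)"
      using gelfand_rep[OF fin Ksub ahom ainv star irr] unfolding K_def .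
  qed
qed


theorem theorem2p39:
  fixes H :: "('g, 'n) monoid_scheme" and W :: "('w, 'm) monoid_scheme"
    and B :: "'w \<Rightarrow> 'w \<Rightarrow> int" and p :: nat and \<alpha> :: "'g \<Rightarrow> 'g"
  assumes "Factorial_Ring.prime p" and "odd p"
    and "group H"
    and "heisenberg_p_group H p W B"
    and "\<alpha> \<in> iso H H"
    and "\<forall>h\<in>carrier H. \<alpha> (\<alpha> h) = h"
    and "\<exists>z\<in>centre H. \<alpha> z \<noteq> z"
  shows "(\<forall>h\<in>carrier H.
            fixed_points H \<alpha> <#>\<^bsub>H\<^esub> {\<alpha> h} <#>\<^bsub>H\<^esub> fixed_points H \<alpha>
          = fixed_points H \<alpha> <#>\<^bsub>H\<^esub> {inv\<^bsub>H\<^esub> h} <#>\<^bsub>H\<^esub> fixed_points H \<alpha>)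
       \<and> (\<forall>n (\<rho> :: 'g \<Rightarrow> complex mat). irreducible_rep H n \<rho> \<longrightarrow>
            dim_le_one n (Hom_triv (fixed_points H \<alpha>) n \<rho>))"
  using group.main_thm[OF assms(3) assms(1-6)] by blast

end
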